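(* Let $\mathcal M_1(\mathbb R^d)$ be the space of finite signed Borel measures $\mu$ on $\mathbb R^d$ with $\int|x|\,\mathrm d|\mu|(x)<\infty$, with the norm $\|\mu\|_{\mathcal W_1}:=\sup\{|\int f\,\mathrm d\mu|: |f(0)|\le1,\ f\text{ is }1\text{-Lipschitz}\}$. Let $$C:=\Big\{\mu\in\mathcal M_1(\mathbb R^d):\int f\,\mathrm d\mu\ge0\text{ for all nonnegative 1-Lipschitz increasing }f\colon\mathbb R^d\to\mathbb R\Big\}.$$ Then $C$ is a cone in $(\mathcal M_1(\mathbb R^d),\|\cdot\|_{\mathcal W_1})$: it is closed and convex, $\lambda C\subset C$ for all $\lambda>0$, and $C\cap(-C)=\{0\}$. Moreover, for $\mu,\nu\in\mathcal P_1(\mathbb R^d)$, $\mu\le_{\mathrm{st}}\nu$ if and only if $\nu-\mu\in C$.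
   Context: Coordinate order on $\mathbb R^d$; $f$ is increasing if $x\le y$ implies $f(x)\le f(y)$; $1$-Lipschitz means $|f(x)-f(y)|\le|x-y|$. $\mathcal P_1(\mathbb R^d)$ is the set of probability measures with finite first moment. Stochastic order: $\mu\le_{\mathrm{st}}\nu$ iff $\int f\mathrm d\mu\le\int f\mathrm d\nu$ for all bounded increasing $f$. $(\mathcal M_1(\mathbb R^d),\|\cdot\|_{\mathcal W_1})$ is a normed vector space. *)

theory Defs
  imports "HOL-Probability.Probability"
begin

text \<open>Finite signed Borel measures on real^'n are represented as real-valued set
functions (defined on all sets, equal to 0 on non-Borel sets).\<close>

definition fm1 :: "(real^'n) measure \<Rightarrow> bool" where
  "fm1 M \<longleftrightarrow> finite_measure M \<and> sets M = sets (borel :: (real^'n) measure)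
      \<and> integrable M (\<lambda>x. norm x)"

definition sm_decomp :: "((real^'n) set \<Rightarrow> real) \<Rightarrow> (real^'n) measure \<Rightarrow> (real^'n) measure \<Rightarrow> bool" where
  "sm_decomp \<mu> M N \<longleftrightarrow> fm1 M \<and> fm1 N \<and>
     (\<forall>A. \<mu> A = (if A \<in> sets (borel :: (real^'n) measure) then measure M A - measure N A else 0))"

definition M1 :: "((real^'n) set \<Rightarrow> real) set" where
  "M1 = {\<mu>. \<exists>M N. sm_decomp \<mu> M N}"

text \<open>Integral against a signed measure (independent of the chosen decomposition
for integrable f, in particular for Lipschitz f).\<close>
definition sm_integral :: "((real^'n) set \<Rightarrow> real) \<Rightarrow> (real^'n \<Rightarrow> real) \<Rightarrow> real" where
  "sm_integral \<mu> f = (SOME r. \<exists>M N. sm_decomp \<mu> M N \<and>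
      r = (\<integral>x. f x \<partial>M) - (\<integral>x. f x \<partial>N))"

definition lip1 :: "(real^'n \<Rightarrow> real) \<Rightarrow> bool" where
  "lip1 f \<longleftrightarrow> (\<forall>x y. \<bar>f x - f y\<bar> \<le> dist x y)"

definition W1norm :: "((real^'n) set \<Rightarrow> real) \<Rightarrow> real" where
  "W1norm \<mu> = Sup {\<bar>sm_integral \<mu> f\<bar> | f. \<bar>f 0\<bar> \<le> 1 \<and> lip1 f}"

text \<open>Coordinatewise order on real^'n is the library order on vec; increasing = mono.\<close>
definition coneC :: "((real^'n) set \<Rightarrow> real) set" where
  "coneC = {\<mu> \<in> M1. \<forall>f. lip1 f \<and> (\<forall>x. 0 \<le> f x) \<and> mono f \<longrightarrow> 0 \<le> sm_integral \<mu> f}"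

definition P1 :: "(real^'n) measure \<Rightarrow> bool" where
  "P1 M \<longleftrightarrow> prob_space M \<and> sets M = sets (borel :: (real^'n) measure)
      \<and> integrable M (\<lambda>x. norm x)"

definition st_le :: "(real^'n) measure \<Rightarrow> (real^'n) measure \<Rightarrow> bool" where
  "st_le \<mu> \<nu> \<longleftrightarrow> (\<forall>f :: real^'n \<Rightarrow> real. f \<in> borel_measurable borel \<and> bounded (range f) \<and> mono f
      \<longrightarrow> (\<integral>x. f x \<partial>\<mu>) \<le> (\<integral>x. f x \<partial>\<nu>))"

definition sm_of :: "(real^'n) measure \<Rightarrow> (real^'n) set \<Rightarrow> real" where
  "sm_of M = (\<lambda>A. if A \<in> sets (borel :: (real^'n) measure) then measure M A else 0)"

end

theory Submission
  imports Defs
begin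


definition addm :: "'a measure \<Rightarrow> 'a measure \<Rightarrow> 'a measure" where
  "addm M N = measure_of (space M) (sets M) (\<lambda>A. emeasure M A + emeasure N A)"

lemma sets_addm[simp]: "sets (addm M N) = sets M"
  by (simp add: addm_def)

lemma space_addm[simp]: "space (addm M N) = space M"
  by (simp add: addm_def)

lemma measurable_addm[simp]: "measurable (addm M N) X = measurable M X"
  by (rule measurable_cong_sets) simp_all

lemma emeasure_addm:
  assumes "sets N = sets M" "A \<in> sets M"
  shows "emeasure (addm M N) A = emeasure M A + emeasure N A"
  unfolding addm_def
proof (rule emeasure_measure_of_sigma)
  show "sigma_algebra (space M) (sets M)" by (rule sets.sigma_algebra_axioms)
  show "positive (sets M) (\<lambda>A. emeasure M A + emeasure N A)"
    by (simp add: positive_def)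
  show "countably_additive (sets M) (\<lambda>A. emeasure M A + emeasure N A)"
    unfolding countably_additive_def
  proof safe
    fix F :: "nat \<Rightarrow> _" assume F: "range F \<subseteq> sets M" "disjoint_family F" "\<Union> (range F) \<in> sets M"
    have "(\<Sum>i. emeasure M (F i) + emeasure N (F i)) = (\<Sum>i. emeasure M (F i)) + (\<Sum>i. emeasure N (F i))"
      by (rule suminf_add[symmetric]) auto
    also have "\<dots> = emeasure M (\<Union> (range F)) + emeasure N (\<Union> (range F))"
      using F assms by (simp add: suminf_emeasure)
    finally show "(\<Sum>i. emeasure M (F i) + emeasure N (F i)) = emeasure M (\<Union> (range F)) + emeasure N (\<Union> (range F))" .
  qed
  show "A \<in> sets M" by fact
qed

lemma bm_cong: "sets N = sets M \<Longrightarrow> f \<in> borel_measurable M \<Longrightarrow> f \<in> borel_measurable N"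
  using measurable_cong_sets[of N M borel borel] by auto

lemma nn_integral_addm:
  assumes N: "sets N = sets M" and f: "f \<in> borel_measurable M"
  shows "nn_integral (addm M N) f = nn_integral M f + nn_integral N f"
  using f
proof induction
  case (cong f g)
  have "space N = space M" using N sets_eq_imp_space_eq by blast
  then show ?case using cong
    by (simp add: cong.hyps cong: nn_integral_cong_simp)
next
  case (set A)
  then show ?case using N by (simp add: emeasure_addm)
next
  case (mult f c)
  have fN: "f \<in> borel_measurable N" using mult(2) bm_cong[OF N] by blast
  show ?case using mult fN
    by (simp add: nn_integral_cmult distrib_left)
next
  case (add f g)
  have "f \<in> borel_measurable N" "g \<in> borel_measurable N" using add bm_cong[OF N] by blast+
  then show ?case using add
    by (simp add: nn_integral_add algebra_simps)
next
  case (seq U)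
  have UN: "\<And>i. U i \<in> borel_measurable N" using seq bm_cong[OF N] by blast
  have "(SUP i. integral\<^sup>N M (U i) + integral\<^sup>N N (U i)) = (SUP i. integral\<^sup>N M (U i)) + (SUP i. integral\<^sup>N N (U i))"
    by (rule ennreal_SUP_add) (use seq in \<open>auto intro!: incseq_nn_integral\<close>)
  then show ?case using seq UN
    by (simp add: nn_integral_monotone_convergence_SUP image_comp)
qed

lemma integrable_addm:
  fixes f :: "'a \<Rightarrow> real"
  assumes N: "sets N = sets M" and fM: "integrable M f" and fN: "integrable N f"
  shows "integrable (addm M N) f"
proof -
  have m: "f \<in> borel_measurable M" using fM by simp
  have "(\<integral>\<^sup>+ x. ennreal (norm (f x)) \<partial>addm M N) = (\<integral>\<^sup>+ x. ennreal (norm (f x)) \<partial>M) + (\<integral>\<^sup>+ x. ennreal (norm (f x)) \<partial>N)"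
    using m by (intro nn_integral_addm N) measurable
  also have "\<dots> < \<infinity>" using fM fN by (simp add: integrable_iff_bounded)
  finally show ?thesis using m by (simp add: integrable_iff_bounded)
qed

lemma integral_addm:
  fixes f :: "'a \<Rightarrow> real"
  assumes N: "sets N = sets M" and fM: "integrable M f" and fN: "integrable N f"
  shows "integral\<^sup>L (addm M N) f = integral\<^sup>L M f + integral\<^sup>L N f"
proof -
  have m: "f \<in> borel_measurable M" using fM by simp
  have I: "integrable (addm M N) f" by (rule integrable_addm[OF assms])
  have p: "(\<integral>\<^sup>+ x. ennreal (f x) \<partial>addm M N) = (\<integral>\<^sup>+ x. ennreal (f x) \<partial>M) + (\<integral>\<^sup>+ x. ennreal (f x) \<partial>N)"
    using m by (intro nn_integral_addm N) measurable
  have n: "(\<integral>\<^sup>+ x. ennreal (- f x) \<partial>addm M N) = (\<integral>\<^sup>+ x. ennreal (- f x) \<partial>M) + (\<integral>\<^sup>+ x. ennreal (- f x) \<partial>N)"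
    using m by (intro nn_integral_addm N) measurable
  have f1: "(\<integral>\<^sup>+ x. ennreal (f x) \<partial>M) < \<infinity>" "(\<integral>\<^sup>+ x. ennreal (f x) \<partial>N) < \<infinity>"
       "(\<integral>\<^sup>+ x. ennreal (- f x) \<partial>M) < \<infinity>" "(\<integral>\<^sup>+ x. ennreal (- f x) \<partial>N) < \<infinity>"
    using fM fN by (auto simp: real_integrable_def top.not_eq_extremum)
  show ?thesis
    unfolding real_lebesgue_integral_def[OF I] real_lebesgue_integral_def[OF fM] real_lebesgue_integral_def[OF fN] p n
    using f1 by (simp add: enn2real_plus)
qed


lemma fm1D:
  assumes "fm1 M"
  shows "finite_measure M" "sets M = sets borel" "integrable M (\<lambda>x. norm x)" "space M = UNIV"
  using assms unfolding fm1_def by (auto dest: sets_eq_imp_space_eq)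

lemma fm1_meas: "fm1 M \<Longrightarrow> measurable M N = measurable borel N"
  by (rule measurable_cong_sets) (auto simp: fm1_def)

lemma lip1_abs_bound:
  assumes "lip1 f" shows "\<bar>f x\<bar> \<le> \<bar>f 0\<bar> + norm x"
proof -
  have "\<bar>f x - f 0\<bar> \<le> norm x" using assms[unfolded lip1_def, rule_format, of x 0] by simp
  then show ?thesis by linarith
qed

lemma lip1_borel:
  assumes "lip1 f" shows "f \<in> borel_measurable borel"
proof -
  have "continuous_on UNIV f"
  proof (rule lipschitz_on_continuous_on)
    show "1-lipschitz_on UNIV f"
      using assms by (intro lipschitz_onI) (auto simp: lip1_def dist_real_def)
  qed
  then show ?thesis by (rule borel_measurable_continuous_onI)
qed

lemma lip1_integrable:
  assumes M: "fm1 M" and f: "lip1 f"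
  shows "integrable M f"
proof -
  interpret finite_measure M using fm1D[OF M] by simp
  have i: "integrable M (\<lambda>x. \<bar>f 0\<bar> + norm x)"
    using fm1D(3)[OF M] by (intro Bochner_Integration.integrable_add integrable_const) auto
  show ?thesis
  proof (rule Bochner_Integration.integrable_bound[OF i])
    show "f \<in> borel_measurable M"
      using lip1_borel[OF f] fm1D(2)[OF M] measurable_cong_sets[of M borel borel borel] by simp
    show "AE x in M. norm (f x) \<le> norm (\<bar>f 0\<bar> + norm x)"
      using lip1_abs_bound[OF f] by simp
  qed
qed

lemma sm_decomp_addm_eq:
  assumes d1: "sm_decomp \<mu> M N" and d2: "sm_decomp \<mu> M' N'"
  shows "addm M N' = addm M' N"
proof (rule measure_eqI)
  have s: "sets M = sets borel" "sets N = sets borel" "sets M' = sets borel" "sets N' = sets borel"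
    using d1 d2 by (auto simp: sm_decomp_def fm1_def)
  have fin: "finite_measure M" "finite_measure N" "finite_measure M'" "finite_measure N'"
    using d1 d2 by (auto simp: sm_decomp_def fm1_def)
  show "sets (addm M N') = sets (addm M' N)" using s by simp
  fix A assume A: "A \<in> sets (addm M N')"
  then have Ab: "A \<in> sets borel" using s by simp
  have eq: "measure M A - measure N A = measure M' A - measure N' A"
  proof -
    have "\<mu> A = measure M A - measure N A" using d1 Ab unfolding sm_decomp_def by simp
    moreover have "\<mu> A = measure M' A - measure N' A" using d2 Ab unfolding sm_decomp_def by simp
    ultimately show ?thesis by simp
  qed
  have "emeasure (addm M N') A = emeasure M A + emeasure N' A"
    using A s by (simp add: emeasure_addm)
  also have "\<dots> = ennreal (measure M A + measure N' A)"
    using fin by (simp add: finite_measure.emeasure_eq_measure ennreal_plus)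
  also have "measure M A + measure N' A = measure M' A + measure N A" using eq by simp
  also have "ennreal (measure M' A + measure N A) = emeasure M' A + emeasure N A"
    using fin by (simp add: finite_measure.emeasure_eq_measure ennreal_plus)
  also have "\<dots> = emeasure (addm M' N) A"
    using A s by (simp add: emeasure_addm)
  finally show "emeasure (addm M N') A = emeasure (addm M' N) A" .
qed

lemma sm_integral_eq:
  assumes d: "sm_decomp \<mu> M N" and f: "lip1 f"
  shows "sm_integral \<mu> f = (\<integral>x. f x \<partial>M) - (\<integral>x. f x \<partial>N)"
proof -
  have key: "(\<integral>x. f x \<partial>M') - (\<integral>x. f x \<partial>N') = (\<integral>x. f x \<partial>M) - (\<integral>x. f x \<partial>N)"
    if d2: "sm_decomp \<mu> M' N'" for M' N'
  proof -
    have fm: "fm1 M" "fm1 N" "fm1 M'" "fm1 N'" using d d2 by (auto simp: sm_decomp_def)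
    have s: "sets M = sets borel" "sets N = sets borel" "sets M' = sets borel" "sets N' = sets borel"
      using fm by (auto simp: fm1_def)
    have i: "integrable M f" "integrable N f" "integrable M' f" "integrable N' f"
      using fm f by (auto intro: lip1_integrable)
    have "integral\<^sup>L (addm M N') f = integral\<^sup>L (addm M' N) f"
      using sm_decomp_addm_eq[OF d d2] by simp
    moreover have "integral\<^sup>L (addm M N') f = integral\<^sup>L M f + integral\<^sup>L N' f"
      using s i by (intro integral_addm) auto
    moreover have "integral\<^sup>L (addm M' N) f = integral\<^sup>L M' f + integral\<^sup>L N f"
      using s i by (intro integral_addm) auto
    ultimately have "integral\<^sup>L M f + integral\<^sup>L N' f = integral\<^sup>L M' f + integral\<^sup>L N f"
      by simp
    then show ?thesis by simp
  qed
  show ?thesis unfolding sm_integral_def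
  proof (rule someI2[where a="(\<integral>x. f x \<partial>M) - (\<integral>x. f x \<partial>N)"])
    show "\<exists>M' N'. sm_decomp \<mu> M' N' \<and> (\<integral>x. f x \<partial>M) - (\<integral>x. f x \<partial>N) = (\<integral>x. f x \<partial>M') - (\<integral>x. f x \<partial>N')"
      using d by blast
    fix r assume "\<exists>M' N'. sm_decomp \<mu> M' N' \<and> r = (\<integral>x. f x \<partial>M') - (\<integral>x. f x \<partial>N')"
    then obtain M' N' where "sm_decomp \<mu> M' N'" "r = (\<integral>x. f x \<partial>M') - (\<integral>x. f x \<partial>N')" by blast
    then show "r = (\<integral>x. f x \<partial>M) - (\<integral>x. f x \<partial>N)" using key by simp
  qed
qed

lemma fm1_addm:
  assumes "fm1 M" "fm1 N" shows "fm1 (addm M N)"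
proof -
  have s: "sets N = sets M" using assms by (simp add: fm1_def)
  have "emeasure (addm M N) (space (addm M N)) \<noteq> \<infinity>"
    using assms s fm1D[OF assms(1)] fm1D[OF assms(2)]
    by (simp add: emeasure_addm finite_measure.emeasure_finite)
  then have "finite_measure (addm M N)" by (rule finite_measureI)
  moreover have "integrable (addm M N) (\<lambda>x. norm x)"
    using assms s by (intro integrable_addm) (auto simp: fm1_def)
  ultimately show ?thesis using assms by (simp add: fm1_def)
qed

lemma measure_addm:
  assumes "fm1 M" "fm1 N" shows "measure (addm M N) A = measure M A + measure N A"
proof (cases "A \<in> sets M")
  case True
  have s: "sets N = sets M" using assms by (simp add: fm1_def)
  have e1: "emeasure M A = ennreal (measure M A)" "emeasure N A = ennreal (measure N A)"
    using fm1D(1)[OF assms(1)] fm1D(1)[OF assms(2)] by (simp_all add: finite_measure.emeasure_eq_measure)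
  have "emeasure (addm M N) A = ennreal (measure M A + measure N A)"
    using True s by (simp add: emeasure_addm e1 ennreal_plus)
  then show ?thesis by (intro measure_eq_emeasure_eq_ennreal) auto
next
  case False
  have s: "sets N = sets M" using assms by (simp add: fm1_def)
  then show ?thesis using False by (simp add: measure_notin_sets)
qed

lemma fm1_scale:
  assumes M: "fm1 M" and c: "0 \<le> c" shows "fm1 (scale_measure (ennreal c) M)"
proof -
  interpret finite_measure M using fm1D[OF M] by simp
  have "emeasure (scale_measure (ennreal c) M) (space (scale_measure (ennreal c) M)) \<noteq> \<infinity>"
    by (simp add: space_scale_measure ennreal_mult_eq_top_iff)
  then have "finite_measure (scale_measure (ennreal c) M)" by (rule finite_measureI)
  moreover have "integrable (scale_measure (ennreal c) M) (\<lambda>x. norm x)"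
  proof -
    have "(\<integral>\<^sup>+ x. ennreal (norm (norm x)) \<partial>scale_measure (ennreal c) M) = ennreal c * (\<integral>\<^sup>+ x. ennreal (norm (norm x)) \<partial>M)"
      by (intro nn_integral_scale_measure) (simp add: fm1_meas[OF M])
    also have "\<dots> < \<infinity>" using fm1D(3)[OF M]
      by (simp add: integrable_iff_bounded ennreal_mult_less_top)
    moreover have "norm \<in> borel_measurable (scale_measure (ennreal c) M)"
    proof -
      have ss: "sets (scale_measure (ennreal c) M) = sets borel" using M by (simp add: fm1_def)
      show ?thesis
        by (subst measurable_cong_sets[OF ss refl[of "sets (borel::real measure)"]]) simp
    qed
    ultimately show ?thesis by (simp add: integrable_iff_bounded)
  qed
  ultimately show ?thesis using M by (simp add: fm1_def)
qed

lemma integral_scale_measure: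
  fixes f :: "'a \<Rightarrow> real"
  assumes f: "integrable M f" and c: "0 \<le> c"
  shows "integral\<^sup>L (scale_measure (ennreal c) M) f = c * integral\<^sup>L M f"
proof -
  have m: "f \<in> borel_measurable M" using f by simp
  have I: "integrable (scale_measure (ennreal c) M) f"
  proof -
    have "(\<integral>\<^sup>+ x. ennreal (norm (f x)) \<partial>scale_measure (ennreal c) M) = ennreal c * (\<integral>\<^sup>+ x. ennreal (norm (f x)) \<partial>M)"
      using m by (intro nn_integral_scale_measure) measurable
    also have "\<dots> < \<infinity>" using f by (simp add: integrable_iff_bounded ennreal_mult_less_top)
    finally show ?thesis using m by (simp add: integrable_iff_bounded)
  qed
  have p: "(\<integral>\<^sup>+ x. ennreal (f x) \<partial>scale_measure (ennreal c) M) = ennreal c * (\<integral>\<^sup>+ x. ennreal (f x) \<partial>M)"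
    using m by (intro nn_integral_scale_measure) measurable
  have n: "(\<integral>\<^sup>+ x. ennreal (- f x) \<partial>scale_measure (ennreal c) M) = ennreal c * (\<integral>\<^sup>+ x. ennreal (- f x) \<partial>M)"
    using m by (intro nn_integral_scale_measure) measurable
  show ?thesis
    unfolding real_lebesgue_integral_def[OF I] real_lebesgue_integral_def[OF f] p n
    using c by (simp add: enn2real_mult right_diff_distrib)
qed

lemma sm_decomp_neg: "sm_decomp \<mu> M N \<Longrightarrow> sm_decomp (\<lambda>A. - \<mu> A) N M"
  by (auto simp: sm_decomp_def)

lemma sm_decomp_add:
  assumes "sm_decomp \<mu> M N" "sm_decomp \<nu> M' N'"
  shows "sm_decomp (\<lambda>A. \<mu> A + \<nu> A) (addm M M') (addm N N')"
  using assms by (auto simp: sm_decomp_def fm1_addm measure_addm)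

lemma sm_decomp_scale:
  assumes "sm_decomp \<mu> M N" "0 \<le> c"
  shows "sm_decomp (\<lambda>A. c * \<mu> A) (scale_measure (ennreal c) M) (scale_measure (ennreal c) N)"
  using assms by (auto simp: sm_decomp_def fm1_scale right_diff_distrib)

lemma sm_decomp_zero: "sm_decomp (\<lambda>A. 0) (null_measure borel) (null_measure borel)"
  by (auto simp: sm_decomp_def fm1_def finite_measureI)


subsection \<open>Linear structure and the W1 bound\<close>

lemma M1_diff:
  assumes m: "\<mu> \<in> M1" "\<nu> \<in> M1" and f: "lip1 f"
  shows "(\<lambda>A. \<mu> A - \<nu> A) \<in> M1 \<and> sm_integral (\<lambda>A. \<mu> A - \<nu> A) f = sm_integral \<mu> f - sm_integral \<nu> f"
proof -
  obtain M N where d1: "sm_decomp \<mu> M N" using m by (auto simp: M1_def)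
  obtain M' N' where d2: "sm_decomp \<nu> M' N'" using m by (auto simp: M1_def)
  have d: "sm_decomp (\<lambda>A. \<mu> A - \<nu> A) (addm M N') (addm N M')"
    using sm_decomp_add[OF d1 sm_decomp_neg[OF d2]] by simp
  have fm: "fm1 M" "fm1 N" "fm1 M'" "fm1 N'" using d1 d2 by (auto simp: sm_decomp_def)
  have s: "sets M = sets borel" "sets N = sets borel" "sets M' = sets borel" "sets N' = sets borel"
    using fm by (auto simp: fm1_def)
  have i: "integrable M f" "integrable N f" "integrable M' f" "integrable N' f"
    using fm f by (auto intro: lip1_integrable)
  have "sm_integral (\<lambda>A. \<mu> A - \<nu> A) f = integral\<^sup>L (addm M N') f - integral\<^sup>L (addm N M') f"
    by (rule sm_integral_eq[OF d f])
  also have "\<dots> = (integral\<^sup>L M f + integral\<^sup>L N' f) - (integral\<^sup>L N f + integral\<^sup>L M' f)"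
    using s i by (simp add: integral_addm)
  also have "\<dots> = sm_integral \<mu> f - sm_integral \<nu> f"
    using sm_integral_eq[OF d1 f] sm_integral_eq[OF d2 f] by simp
  finally show ?thesis using d by (auto simp: M1_def)
qed

lemma M1_comb:
  assumes m: "\<mu> \<in> M1" "\<nu> \<in> M1" and f: "lip1 f" and ab: "0 \<le> a" "0 \<le> b"
  shows "(\<lambda>A. a * \<mu> A + b * \<nu> A) \<in> M1 \<and> sm_integral (\<lambda>A. a * \<mu> A + b * \<nu> A) f = a * sm_integral \<mu> f + b * sm_integral \<nu> f"
proof -
  obtain M N where d1: "sm_decomp \<mu> M N" using m by (auto simp: M1_def)
  obtain M' N' where d2: "sm_decomp \<nu> M' N'" using m by (auto simp: M1_def)
  let ?aM = "scale_measure (ennreal a) M" and ?aN = "scale_measure (ennreal a) N"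
  let ?bM = "scale_measure (ennreal b) M'" and ?bN = "scale_measure (ennreal b) N'"
  have d: "sm_decomp (\<lambda>A. a * \<mu> A + b * \<nu> A) (addm ?aM ?bM) (addm ?aN ?bN)"
    using sm_decomp_add[OF sm_decomp_scale[OF d1 ab(1)] sm_decomp_scale[OF d2 ab(2)]] by simp
  have fm: "fm1 M" "fm1 N" "fm1 M'" "fm1 N'" using d1 d2 by (auto simp: sm_decomp_def)
  have s: "sets M = sets borel" "sets N = sets borel" "sets M' = sets borel" "sets N' = sets borel"
    using fm by (auto simp: fm1_def)
  have i: "integrable M f" "integrable N f" "integrable M' f" "integrable N' f"
    using fm f by (auto intro: lip1_integrable)
  have i2: "integrable ?aM f" "integrable ?aN f" "integrable ?bM f" "integrable ?bN f"
    using fm f ab by (auto intro!: lip1_integrable fm1_scale)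
  have "sm_integral (\<lambda>A. a * \<mu> A + b * \<nu> A) f = integral\<^sup>L (addm ?aM ?bM) f - integral\<^sup>L (addm ?aN ?bN) f"
    by (rule sm_integral_eq[OF d f])
  also have "\<dots> = (integral\<^sup>L ?aM f + integral\<^sup>L ?bM f) - (integral\<^sup>L ?aN f + integral\<^sup>L ?bN f)"
    using s i2 by (simp add: integral_addm)
  also have "\<dots> = (a * integral\<^sup>L M f + b * integral\<^sup>L M' f) - (a * integral\<^sup>L N f + b * integral\<^sup>L N' f)"
    using i ab by (simp add: integral_scale_measure)
  also have "\<dots> = a * sm_integral \<mu> f + b * sm_integral \<nu> f"
    unfolding sm_integral_eq[OF d1 f] sm_integral_eq[OF d2 f] by (simp add: algebra_simps)
  finally show ?thesis using d by (auto simp: M1_def)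
qed

lemma M1_scale:
  assumes m: "\<mu> \<in> M1" and f: "lip1 f" and a: "0 \<le> a"
  shows "(\<lambda>A. a * \<mu> A) \<in> M1 \<and> sm_integral (\<lambda>A. a * \<mu> A) f = a * sm_integral \<mu> f"
proof -
  obtain M N where d1: "sm_decomp \<mu> M N" using m by (auto simp: M1_def)
  have d: "sm_decomp (\<lambda>A. a * \<mu> A) (scale_measure (ennreal a) M) (scale_measure (ennreal a) N)"
    by (rule sm_decomp_scale[OF d1 a])
  have fm: "fm1 M" "fm1 N" using d1 by (auto simp: sm_decomp_def)
  have i: "integrable M f" "integrable N f"
    using fm f by (auto intro: lip1_integrable)
  have "sm_integral (\<lambda>A. a * \<mu> A) f = integral\<^sup>L (scale_measure (ennreal a) M) f - integral\<^sup>L (scale_measure (ennreal a) N) f"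
    by (rule sm_integral_eq[OF d f])
  also have "\<dots> = a * sm_integral \<mu> f"
    using i a sm_integral_eq[OF d1 f] by (simp add: integral_scale_measure right_diff_distrib)
  finally show ?thesis using d by (auto simp: M1_def)
qed

lemma W1_bound:
  assumes m: "\<mu> \<in> M1" and f0: "\<bar>f 0\<bar> \<le> 1" and f: "lip1 f"
  shows "\<bar>sm_integral \<mu> f\<bar> \<le> W1norm \<mu>"
proof -
  obtain M N where d: "sm_decomp \<mu> M N" using m by (auto simp: M1_def)
  have fm: "fm1 M" "fm1 N" using d by (auto simp: sm_decomp_def)
  define B where "B = (\<integral>x. 1 + norm x \<partial>M) + (\<integral>x. 1 + norm x \<partial>N)"
  have ib: "integrable M (\<lambda>x. 1 + norm x)" "integrable N (\<lambda>x. 1 + norm x)"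
    using fm by (auto intro!: Bochner_Integration.integrable_add finite_measure.integrable_const dest: fm1D)
  have bnd: "\<bar>sm_integral \<mu> g\<bar> \<le> B" if g0: "\<bar>g 0\<bar> \<le> 1" and g: "lip1 g" for g
  proof -
    have pw: "\<bar>g x\<bar> \<le> 1 + norm x" for x using lip1_abs_bound[OF g, of x] g0 by linarith
    have "\<bar>integral\<^sup>L M g\<bar> \<le> (\<integral>x. 1 + norm x \<partial>M)"
      using pw ib lip1_integrable[OF fm(1) g] by (intro integral_abs_bound_integral) auto
    moreover have "\<bar>integral\<^sup>L N g\<bar> \<le> (\<integral>x. 1 + norm x \<partial>N)"
      using pw ib lip1_integrable[OF fm(2) g] by (intro integral_abs_bound_integral) auto
    ultimately show ?thesis unfolding sm_integral_eq[OF d g] B_def by linarith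
  qed
  show ?thesis unfolding W1norm_def
  proof (rule cSup_upper)
    show "\<bar>sm_integral \<mu> f\<bar> \<in> {\<bar>sm_integral \<mu> f\<bar> |f. \<bar>f 0\<bar> \<le> 1 \<and> lip1 f}" using f0 f by blast
    show "bdd_above {\<bar>sm_integral \<mu> f\<bar> |f. \<bar>f 0\<bar> \<le> 1 \<and> lip1 f}"
      using bnd by (auto intro!: bdd_aboveI[where M=B])
  qed
qed


subsection \<open>Upper sets\<close>

definition upper :: "(real^'n) set \<Rightarrow> bool" where
  "upper U \<longleftrightarrow> (\<forall>x y. x \<in> U \<longrightarrow> x \<le> y \<longrightarrow> y \<in> U)"

lemma infdist_upper:
  fixes F :: "(real^'n) set"
  assumes up: "upper F" and xy: "x \<le> y"
  shows "infdist y F \<le> infdist x F"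
proof (cases "F = {}")
  case True then show ?thesis by (simp add: infdist_def)
next
  case ne: False
  have "infdist y F \<le> (INF a\<in>F. dist x a)"
  proof (rule cINF_greatest[OF ne])
    fix a assume a: "a \<in> F"
    have "a \<le> a + (y - x)" using xy by (simp add: less_eq_vec_def)
    then have "a + (y - x) \<in> F" using up a by (auto simp: upper_def)
    then have "infdist y F \<le> dist y (a + (y - x))" by (rule infdist_le)
    also have "dist y (a + (y - x)) = dist x a" by (simp add: dist_norm algebra_simps)
    finally show "infdist y F \<le> dist x a" .
  qed
  then show ?thesis using ne by (simp add: infdist_def)
qed

lemma closed_upper_le:
  fixes M N :: "(real^'n) measure"
  assumes M: "fm1 M" and N: "fm1 N"
    and H: "\<And>f. lip1 f \<Longrightarrow> (\<forall>x. 0 \<le> f x) \<Longrightarrow> mono f \<Longrightarrow> integral\<^sup>L M f \<le> integral\<^sup>L N f"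
    and F: "closed F" and up: "upper F"
  shows "measure M F \<le> measure N F"
proof (cases "F = {}")
  case True then show ?thesis by simp
next
  case ne: False
  define g where "g k x = max 0 (1 / real (Suc k) - infdist x F)" for k x
  define h where "h k x = real (Suc k) * g k x" for k x
  have glip: "lip1 (g k)" for k
    unfolding lip1_def g_def
  proof safe
    fix x y :: "real^'n"
    have "\<bar>max 0 (1 / real (Suc k) - infdist x F) - max 0 (1 / real (Suc k) - infdist y F)\<bar>
        \<le> \<bar>infdist x F - infdist y F\<bar>" by (auto simp: max_def abs_le_iff)
    also have "\<dots> \<le> dist x y" by (rule infdist_triangle_abs)
    finally show "\<bar>max 0 (1 / real (Suc k) - infdist x F) - max 0 (1 / real (Suc k) - infdist y F)\<bar> \<le> dist x y" .
  qed
  have gmono: "mono (g k)" for k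
    unfolding mono_def g_def
  proof (intro allI impI)
    fix x y :: "real^'n" assume xy: "x \<le> y"
    show "max 0 (1 / real (Suc k) - infdist x F) \<le> max 0 (1 / real (Suc k) - infdist y F)"
      using infdist_upper[OF up xy] by (intro max.mono) auto
  qed
  have gnn: "\<forall>x. 0 \<le> g k x" for k by (simp add: g_def)
  have hle: "integral\<^sup>L M (h k) \<le> integral\<^sup>L N (h k)" for k
    using H[OF glip[of k] gnn[of k] gmono[of k]] unfolding h_def by simp
  have hmeas: "h k \<in> borel_measurable borel" for k
    unfolding h_def using lip1_borel[OF glip[of k]] by measurable
  have hbnd: "norm (h k x) \<le> 1" for k x
  proof -
    have c: "0 < real (Suc k)" by simp
    have g0: "0 \<le> g k x" and g1: "g k x \<le> 1 / real (Suc k)"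
      unfolding g_def using infdist_nonneg[of x F] by auto
    have "h k x \<le> real (Suc k) * (1 / real (Suc k))"
      unfolding h_def using g1 c by (intro mult_left_mono) auto
    then have "h k x \<le> 1" using c by simp
    moreover have "0 \<le> h k x" unfolding h_def using g0 by simp
    ultimately show ?thesis by simp
  qed
  have hlim: "(\<lambda>k. h k x) \<longlonglongrightarrow> indicator F x" for x
  proof (cases "x \<in> F")
    case True
    then have "h k x = 1" for k unfolding h_def g_def by simp
    then show ?thesis using True by simp
  next
    case False
    then have d: "0 < infdist x F" using infdist_pos_not_in_closed[OF F ne] by simp
    have "eventually (\<lambda>k. h k x = 0) sequentially"
      unfolding eventually_sequentially
    proof (intro exI allI impI)
      fix k assume k: "nat \<lceil>1 / infdist x F\<rceil> \<le> k"
      have "1 / infdist x F \<le> real k" using k real_nat_ceiling_ge[of "1 / infdist x F"] by linarith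
      then have "1 / infdist x F \<le> real (Suc k)" by simp
      then have "1 / real (Suc k) \<le> infdist x F" using d
        by (metis divide_le_eq_1_pos divide_divide_eq_left' divide_le_cancel of_nat_0_less_iff zero_less_Suc mult.commute le_divide_eq_1_pos)
      then show "h k x = 0" unfolding h_def g_def by simp
    qed
    then have "(\<lambda>k. h k x) \<longlonglongrightarrow> 0" by (rule tendsto_eventually)
    then show ?thesis using False by simp
  qed
  have Fb: "F \<in> sets borel" using F by simp
  have lim: "(\<lambda>k. integral\<^sup>L L (h k)) \<longlonglongrightarrow> measure L F" if L: "fm1 L" for L
  proof -
    interpret finite_measure L using fm1D[OF L] by simp
    have "(\<lambda>k. integral\<^sup>L L (h k)) \<longlonglongrightarrow> integral\<^sup>L L (indicator F)"
    proof (rule integral_dominated_convergence[where w="\<lambda>x. 1"])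
      show "indicator F \<in> borel_measurable L" using Fb by (simp add: fm1_meas[OF L])
      show "h k \<in> borel_measurable L" for k using hmeas by (simp add: fm1_meas[OF L])
      show "integrable L (\<lambda>x. 1::real)" by simp
      show "AE x in L. (\<lambda>k. h k x) \<longlonglongrightarrow> indicator F x" using hlim by simp
      show "AE x in L. norm (h k x) \<le> 1" for k using hbnd by simp
    qed
    then show ?thesis using fm1D(4)[OF L] by simp
  qed
  show ?thesis by (rule LIMSEQ_le[OF lim[OF M] lim[OF N]]) (use hle in auto)
qed

lemma borel_upper_le:
  fixes M N :: "(real^'n) measure"
  assumes M: "fm1 M" and N: "fm1 N"
    and H: "\<And>f. lip1 f \<Longrightarrow> (\<forall>x. 0 \<le> f x) \<Longrightarrow> mono f \<Longrightarrow> integral\<^sup>L M f \<le> integral\<^sup>L N f"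
    and U: "U \<in> sets borel" and up: "upper U"
  shows "measure M U \<le> measure N U"
proof (rule ccontr)
  assume "\<not> ?thesis"
  then have lt: "measure N U < measure M U" by simp
  interpret fM: finite_measure M using fm1D[OF M] by simp
  interpret fN: finite_measure N using fm1D[OF N] by simp
  have sM: "sets M = sets borel" using fm1D[OF M] by simp
  have sN: "sets N = sets borel" using fm1D[OF N] by simp
  have "emeasure M U = (SUP K \<in> {K. K \<subseteq> U \<and> compact K}. emeasure M K)"
    by (rule inner_regular[OF sM _ U]) simp
  moreover have "ennreal (measure N U) < emeasure M U"
    using lt by (simp add: fM.emeasure_eq_measure ennreal_less_iff)
  ultimately obtain K where K: "K \<subseteq> U" "compact K" and lt2: "ennreal (measure N U) < emeasure M K"
    by (auto simp: less_SUP_iff)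
  have Kb: "K \<in> sets M" using K(2) sM by (simp add: compact_imp_closed)
  have lt3: "measure N U < measure M K"
    using lt2 by (simp add: fM.emeasure_eq_measure ennreal_less_iff)
  define F where "F = (\<Union>x\<in>K. \<Union>y\<in>{y::real^'n. \<forall>i. 0 \<le> y $ i}. {x + y})"
  have cl0: "closed {y::real^'n. \<forall>i. 0 \<le> y $ i}"
    by (intro closed_Collect_all closed_Collect_le continuous_intros)
  have Fc: "closed F" unfolding F_def by (rule compact_closed_sums[OF K(2) cl0])
  have Fup: "upper F"
    unfolding upper_def F_def
  proof safe
    fix x y w :: "real^'n" assume "x \<in> K" "\<forall>i. 0 \<le> y $ i" "x + y \<le> w"
    then have "x \<in> K" "\<forall>i. 0 \<le> (w - x) $ i" "w = x + (w - x)"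
      by (auto simp: less_eq_vec_def intro: order_trans[rotated])
    then show "w \<in> (\<Union>x\<in>K. \<Union>y\<in>{y. \<forall>i. 0 \<le> y $ i}. {x + y})"
      by blast
  qed
  have KF: "K \<subseteq> F"
  proof
    fix x assume x: "x \<in> K"
    have "x = x + 0" "(0::real^'n) \<in> {y::real^'n. \<forall>i. 0 \<le> y $ i}" by auto
    then show "x \<in> F" unfolding F_def using x by blast
  qed
  have FU: "F \<subseteq> U"
  proof
    fix z assume "z \<in> F"
    then obtain x y where "x \<in> K" "\<forall>i. 0 \<le> y $ i" "z = x + y" by (auto simp: F_def)
    moreover have "x \<le> x + y" using calculation by (simp add: less_eq_vec_def)
    ultimately show "z \<in> U" using K(1) up by (auto simp: upper_def)
  qed
  have Fb: "F \<in> sets borel" using Fc by simp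
  have "measure M K \<le> measure M F" using KF Fb sM by (intro fM.finite_measure_mono) auto
  also have "\<dots> \<le> measure N F" by (rule closed_upper_le[OF M N H Fc Fup])
  also have "\<dots> \<le> measure N U" using FU U sN by (intro fN.finite_measure_mono) auto
  finally show False using lt3 by simp
qed


subsection \<open>Uniqueness from upper sets\<close>

lemma sets_borel_atMost:
  "sets (borel :: (real^'n) measure) = sigma_sets UNIV (range (\<lambda>a::real^'n. {..a}))"
  by (subst borel_eq_atMost) (simp add: sets_measure_of)

lemma measure_eq_upper:
  fixes M N :: "(real^'n) measure"
  assumes M: "fm1 M" and N: "fm1 N"
    and eq: "\<And>U. U \<in> sets borel \<Longrightarrow> upper U \<Longrightarrow> measure M U = measure N U"
  shows "M = N"
proof -
  interpret fM: finite_measure M using fm1D[OF M] by simp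
  interpret fN: finite_measure N using fm1D[OF N] by simp
  let ?E = "range (\<lambda>a::real^'n. {..a})"
  have sM: "sets M = sigma_sets UNIV ?E" using fm1D(2)[OF M] sets_borel_atMost by simp
  have sN: "sets N = sigma_sets UNIV ?E" using fm1D(2)[OF N] sets_borel_atMost by simp
  have Eb: "{..a} \<in> sets (borel :: (real^'n) measure)" for a :: "real^'n"
    unfolding sets_borel_atMost by (rule sigma_sets.Basic) auto
  show ?thesis
  proof (rule measure_eqI_generator_eq[where E="?E" and \<Omega>=UNIV and A="\<lambda>i. {..(\<chi> j. real i)}"])
    show "Int_stable ?E"
    proof (rule Int_stableI)
      fix A B assume "A \<in> ?E" "B \<in> ?E"
      then obtain a b where ab: "A = {..a}" "B = {..b}" by auto
      have "{..a} \<inter> {..b} = {..(\<chi> i. min (a $ i) (b $ i))}"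
        by (auto simp: less_eq_vec_def)
      then show "A \<inter> B \<in> ?E" using ab by auto
    qed
    show "?E \<subseteq> Pow UNIV" by auto
    show "sets M = sigma_sets UNIV ?E" by (rule sM)
    show "sets N = sigma_sets UNIV ?E" by (rule sN)
    show "range (\<lambda>i. {..(\<chi> j. real i)}) \<subseteq> ?E" by auto
    show "(\<Union>i. {..(\<chi> j. real i)::real^'n}) = UNIV"
    proof (safe; simp)
      fix x :: "real^'n"
      have "x $ j \<le> real (nat \<lceil>norm x\<rceil>)" for j
        using component_le_norm_cart[of x j] real_nat_ceiling_ge[of "norm x"] by linarith
      then show "\<exists>i. x \<le> (\<chi> j. real i)"
        by (intro exI[of _ "nat \<lceil>norm x\<rceil>"]) (auto simp: less_eq_vec_def)
    qed
    show "emeasure M {..(\<chi> j. real i)} \<noteq> \<infinity>" for i by simp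
    fix X assume "X \<in> ?E"
    then obtain a where X: "X = {..a}" by auto
    let ?V = "UNIV - {..a}"
    have Vb: "?V \<in> sets borel" using Eb by auto
    have Vu: "upper ?V" unfolding upper_def by (auto dest: order_trans)
    have Uu: "upper (UNIV :: (real^'n) set)" by (simp add: upper_def)
    have "measure M X = measure M UNIV - measure M ?V"
      using fM.finite_measure_compl[of ?V] Vb fm1D[OF M] X by (simp add: Diff_Diff_Int)
    also have "\<dots> = measure N UNIV - measure N ?V" using eq[OF Vb Vu] eq[OF _ Uu] by simp
    also have "\<dots> = measure N X"
      using fN.finite_measure_compl[of ?V] Vb fm1D[OF N] X by (simp add: Diff_Diff_Int)
    finally show "emeasure M X = emeasure N X"
      by (simp add: fM.emeasure_eq_measure fN.emeasure_eq_measure)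
  qed
qed

lemma zero_coneC: "((\<lambda>A. 0) :: (real^'n) set \<Rightarrow> real) \<in> coneC"
  unfolding coneC_def
proof (intro CollectI conjI allI impI)
  show "((\<lambda>A. 0) :: (real^'n) set \<Rightarrow> real) \<in> M1" using sm_decomp_zero by (auto simp: M1_def)
  fix f :: "real^'n \<Rightarrow> real" assume "lip1 f \<and> (\<forall>x. 0 \<le> f x) \<and> mono f"
  then have f: "lip1 f" by simp
  have "sm_integral (\<lambda>A. 0) f = integral\<^sup>L (null_measure borel) f - integral\<^sup>L (null_measure borel) f"
    by (rule sm_integral_eq[OF sm_decomp_zero f])
  then show "0 \<le> sm_integral (\<lambda>A. 0) f" by simp
qed

lemma cone_pointed:
  "coneC \<inter> (\<lambda>\<mu> A. - \<mu> A) ` coneC = {(\<lambda>A. 0) :: (real^'n) set \<Rightarrow> real}"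
proof
  show "{(\<lambda>A. 0) :: (real^'n) set \<Rightarrow> real} \<subseteq> coneC \<inter> (\<lambda>\<mu> A. - \<mu> A) ` coneC"
  proof -
    have "(\<lambda>A. 0) = (\<lambda>A. - (\<lambda>A. 0::real) (A :: (real^'n) set))" by simp
    then have "(\<lambda>A. 0) \<in> (\<lambda>\<mu> A. - \<mu> A) ` (coneC :: ((real^'n) set \<Rightarrow> real) set)"
      using zero_coneC by (intro image_eqI) auto
    then show ?thesis using zero_coneC by auto
  qed
  show "coneC \<inter> (\<lambda>\<mu> A. - \<mu> A) ` coneC \<subseteq> {(\<lambda>A. 0) :: (real^'n) set \<Rightarrow> real}"
  proof safe
    fix \<mu> \<nu> :: "(real^'n) set \<Rightarrow> real"
    assume mu: "(\<lambda>A. - \<nu> A) \<in> coneC" and nu: "\<nu> \<in> coneC"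
    obtain M N where d: "sm_decomp \<nu> M N" using nu by (auto simp: coneC_def M1_def)
    have d': "sm_decomp (\<lambda>A. - \<nu> A) N M" by (rule sm_decomp_neg[OF d])
    have fm: "fm1 M" "fm1 N" using d by (auto simp: sm_decomp_def)
    have H1: "integral\<^sup>L N f \<le> integral\<^sup>L M f" if "lip1 f" "\<forall>x. 0 \<le> f x" "mono f" for f
      using nu that sm_integral_eq[OF d that(1)] by (auto simp: coneC_def)
    have H2: "integral\<^sup>L M f \<le> integral\<^sup>L N f" if "lip1 f" "\<forall>x. 0 \<le> f x" "mono f" for f
      using mu that sm_integral_eq[OF d' that(1)] by (auto simp: coneC_def)
    have "M = N"
    proof (rule measure_eq_upper[OF fm])
      fix U :: "(real^'n) set" assume "U \<in> sets borel" "upper U"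
      then show "measure M U = measure N U"
        using borel_upper_le[OF fm H2] borel_upper_le[OF fm(2,1) H1] by (auto intro: antisym)
    qed
    then show "(\<lambda>A. - \<nu> A) = (\<lambda>A. 0)"
      using d by (auto simp: sm_decomp_def fun_eq_iff)
  qed
qed


lemma cone_closed:
  fixes s :: "nat \<Rightarrow> (real^'n) set \<Rightarrow> real"
  assumes s: "\<forall>k. s k \<in> coneC" and mu: "\<mu> \<in> M1"
    and lim: "(\<lambda>k. W1norm (\<lambda>A. s k A - \<mu> A)) \<longlonglongrightarrow> 0"
  shows "\<mu> \<in> coneC"
  unfolding coneC_def
proof (intro CollectI conjI allI impI)
  show "\<mu> \<in> M1" by fact
  fix f :: "real^'n \<Rightarrow> real" assume "lip1 f \<and> (\<forall>x. 0 \<le> f x) \<and> mono f"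
  then have f: "lip1 f" and fnn: "\<forall>x. 0 \<le> f x" and fm: "mono f" by auto
  define c where "c = max 1 (f 0)"
  have c1: "1 \<le> c" by (simp add: c_def)
  define g where "g x = f x / c" for x
  have glip: "lip1 g" unfolding lip1_def g_def
  proof (intro allI)
    fix x y
    have "\<bar>f x / c - f y / c\<bar> = \<bar>f x - f y\<bar> / c" using c1 by (simp add: diff_divide_distrib[symmetric])
    also have "\<dots> \<le> \<bar>f x - f y\<bar>"
    proof -
      have "1 * \<bar>f x - f y\<bar> \<le> c * \<bar>f x - f y\<bar>" using c1 by (intro mult_right_mono) auto
      then show ?thesis using c1 by (simp add: divide_le_eq mult.commute)
    qed
    also have "\<dots> \<le> dist x y" using f by (simp add: lip1_def)
    finally show "\<bar>f x / c - f y / c\<bar> \<le> dist x y" .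
  qed
  have gnn: "\<forall>x. 0 \<le> g x" using fnn c1 by (simp add: g_def)
  have gm: "mono g" using fm c1 unfolding mono_def g_def by (auto intro: divide_right_mono)
  have g0: "\<bar>g 0\<bar> \<le> 1" using fnn c1 by (simp add: g_def c_def)
  have sM1: "s k \<in> M1" for k using s by (simp add: coneC_def)
  have spos: "0 \<le> sm_integral (s k) g" for k using s glip gnn gm by (simp add: coneC_def)
  define a where "a k = sm_integral (s k) g - sm_integral \<mu> g" for k
  have abnd: "norm (a k) \<le> W1norm (\<lambda>A. s k A - \<mu> A)" for k
    using M1_diff[OF sM1[of k] mu glip] W1_bound[OF _ g0 glip, of "\<lambda>A. s k A - \<mu> A"]
    by (simp add: a_def)
  have "a \<longlonglongrightarrow> 0" by (rule Lim_null_comparison[OF _ lim]) (use abnd in auto)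
  then have "(\<lambda>k. a k + sm_integral \<mu> g) \<longlonglongrightarrow> 0 + sm_integral \<mu> g" by (intro tendsto_add) auto
  then have "(\<lambda>k. sm_integral (s k) g) \<longlonglongrightarrow> sm_integral \<mu> g" by (simp add: a_def)
  then have gpos: "0 \<le> sm_integral \<mu> g" by (rule LIMSEQ_le_const) (use spos in auto)
  obtain M N where d: "sm_decomp \<mu> M N" using mu by (auto simp: M1_def)
  have "sm_integral \<mu> g = sm_integral \<mu> f / c"
    unfolding sm_integral_eq[OF d glip] sm_integral_eq[OF d f] g_def by (simp add: diff_divide_distrib)
  then show "0 \<le> sm_integral \<mu> f" using gpos c1 by (simp add: zero_le_divide_iff)
qed

lemma cone_convex:
  assumes mu: "\<mu> \<in> (coneC :: ((real^'n) set \<Rightarrow> real) set)" and nu: "\<nu> \<in> coneC" and t: "t \<in> {0..1::real}"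
  shows "(\<lambda>A. t * \<mu> A + (1 - t) * \<nu> A) \<in> coneC"
  unfolding coneC_def
proof (intro CollectI conjI allI impI)
  have m: "\<mu> \<in> M1" "\<nu> \<in> M1" using mu nu by (auto simp: coneC_def)
  have ab: "0 \<le> t" "0 \<le> 1 - t" using t by auto
  have l: "lip1 (\<lambda>x. 0)" by (simp add: lip1_def)
  show "(\<lambda>A. t * \<mu> A + (1 - t) * \<nu> A) \<in> M1" using M1_comb[OF m l ab] by simp
  fix f :: "real^'n \<Rightarrow> real" assume "lip1 f \<and> (\<forall>x. 0 \<le> f x) \<and> mono f"
  then have f: "lip1 f" and p: "0 \<le> sm_integral \<mu> f" "0 \<le> sm_integral \<nu> f"
    using mu nu by (auto simp: coneC_def)
  show "0 \<le> sm_integral (\<lambda>A. t * \<mu> A + (1 - t) * \<nu> A) f"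
    using M1_comb[OF m f ab] p ab by simp
qed

lemma cone_scale:
  assumes c: "0 < c" and mu: "\<mu> \<in> (coneC :: ((real^'n) set \<Rightarrow> real) set)"
  shows "(\<lambda>A. c * \<mu> A) \<in> coneC"
  unfolding coneC_def
proof (intro CollectI conjI allI impI)
  have m: "\<mu> \<in> M1" using mu by (auto simp: coneC_def)
  have l: "lip1 (\<lambda>x. 0)" by (simp add: lip1_def)
  show "(\<lambda>A. c * \<mu> A) \<in> M1" using M1_scale[OF m l] c by simp
  fix f :: "real^'n \<Rightarrow> real" assume "lip1 f \<and> (\<forall>x. 0 \<le> f x) \<and> mono f"
  then have f: "lip1 f" and p: "0 \<le> sm_integral \<mu> f"
    using mu by (auto simp: coneC_def)
  show "0 \<le> sm_integral (\<lambda>A. c * \<mu> A) f"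
    using M1_scale[OF m f] p c by simp
qed


subsection \<open>Stochastic order\<close>

lemma count_upper:
  fixes y :: real assumes "0 \<le> y"
  shows "(\<Sum>j\<in>{1..N}. if real j < y then 1 else 0) \<le> y"
proof (induction N)
  case 0 then show ?case using assms by simp
next
  case (Suc N)
  have le: "(\<Sum>j\<in>{1..N}. if real j < y then 1 else 0) \<le> real N"
  proof -
    have "(\<Sum>j\<in>{1..N}. if real j < y then 1 else 0) \<le> (\<Sum>j\<in>{1..N}. (1::real))"
      by (intro sum_mono) auto
    then show ?thesis by simp
  qed
  have eq: "(\<Sum>j\<in>{1..Suc N}. if real j < y then 1 else 0) = (\<Sum>j\<in>{1..N}. if real j < y then 1 else 0) + (if real (Suc N) < y then 1 else (0::real))"
    by simp
  show ?case
  proof (cases "real (Suc N) < y")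
    case True then show ?thesis using le eq by simp
  next
    case False then show ?thesis using Suc eq by simp
  qed
qed

lemma count_lower:
  fixes y :: real assumes "y \<le> real N"
  shows "y - 1 \<le> (\<Sum>j\<in>{1..N}. if real j < y then 1 else 0)"
  using assms
proof (induction N)
  case 0 then show ?case by simp
next
  case (Suc N)
  have eq: "(\<Sum>j\<in>{1..Suc N}. if real j < y then 1 else 0) = (\<Sum>j\<in>{1..N}. if real j < y then 1 else 0) + (if real (Suc N) < y then 1 else (0::real))"
    by simp
  have nn: "0 \<le> (if real (Suc N) < y then 1 else (0::real))" by simp
  show ?case
  proof (cases "y \<le> real N")
    case True then show ?thesis using Suc.IH eq nn by linarith
  next
    case False
    then have "(\<Sum>j\<in>{1..N}. if real j < y then 1 else (0::real)) = (\<Sum>j\<in>{1..N}. 1)"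
      by (intro sum.cong) auto
    then have "(\<Sum>j\<in>{1..N}. if real j < y then 1 else (0::real)) = real N" by simp
    then show ?thesis using eq nn Suc.prems by simp
  qed
qed

lemma P1_fm1: "P1 M \<Longrightarrow> fm1 M"
  by (auto simp: P1_def fm1_def prob_space_def)

lemma sm_decomp_P1:
  assumes "P1 \<mu>" "P1 \<nu>"
  shows "sm_decomp (\<lambda>A. sm_of \<nu> A - sm_of \<mu> A) \<nu> \<mu>"
  using assms P1_fm1 by (auto simp: sm_decomp_def sm_of_def)

lemma step_approx:
  fixes g :: "real^'n \<Rightarrow> real" and \<mu> \<nu> :: "(real^'n) measure"
  assumes P: "P1 \<mu>" "P1 \<nu>"
    and UL: "\<And>U. U \<in> sets borel \<Longrightarrow> upper U \<Longrightarrow> measure \<mu> U \<le> measure \<nu> U"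
    and gm: "g \<in> borel_measurable borel" and g0: "\<And>x. 0 \<le> g x" and gC: "\<And>x. g x \<le> C"
    and gmono: "mono g" and n: "0 < n"
  shows "(\<integral>x. g x \<partial>\<mu>) \<le> (\<integral>x. g x \<partial>\<nu>) + 1 / real n"
proof -
  define N where "N = nat \<lceil>real n * C\<rceil>"
  define U where "U j = {x. real j < real n * g x}" for j
  define s where "s x = (\<Sum>j\<in>{1..N}. indicator (U j) x) / real n" for x
  have Ub: "U j \<in> sets borel" for j unfolding U_def using gm by measurable
  have Uu: "upper (U j)" for j
    unfolding upper_def U_def using gmono n by (auto simp: mono_def intro: less_le_trans mult_left_mono)
  have sx: "s x = (\<Sum>j\<in>{1..N}. if real j < real n * g x then 1 else 0) / real n" for x
    unfolding s_def U_def by (intro arg_cong[where f="\<lambda>t. t / real n"] sum.cong) (auto simp: indicator_def)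
  have s_le: "s x \<le> g x" for x
  proof -
    have "(\<Sum>j\<in>{1..N}. if real j < real n * g x then 1 else 0) \<le> real n * g x"
      using g0[of x] n by (intro count_upper) auto
    then show ?thesis unfolding sx using n by (simp add: divide_le_eq mult.commute)
  qed
  have s_ge: "g x \<le> s x + 1 / real n" for x
  proof -
    have "real n * g x \<le> real n * C" using gC[of x] n by simp
    also have "\<dots> \<le> real N" unfolding N_def by (rule real_nat_ceiling_ge)
    finally have "real n * g x - 1 \<le> (\<Sum>j\<in>{1..N}. if real j < real n * g x then 1 else 0)"
      by (rule count_lower)
    then have "(real n * g x - 1) / real n \<le> (\<Sum>j\<in>{1..N}. if real j < real n * g x then 1 else 0) / real n"
      using n by (intro divide_right_mono) auto
    then show ?thesis unfolding sx using n by (simp add: diff_divide_distrib)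
  qed
  have fm: "fm1 \<mu>" "fm1 \<nu>" using P by (auto intro: P1_fm1)
  interpret pm: prob_space \<mu> using P by (simp add: P1_def)
  interpret pn: prob_space \<nu> using P by (simp add: P1_def)
  have sets: "sets \<mu> = sets borel" "sets \<nu> = sets borel" using P by (auto simp: P1_def)
  have sp: "space \<mu> = UNIV" "space \<nu> = UNIV" using fm by (auto dest: fm1D)
  have int_s: "integral\<^sup>L L s = (\<Sum>j\<in>{1..N}. measure L (U j)) / real n"
    and isL: "integrable L s"
    if L: "prob_space L" "sets L = sets borel" "space L = UNIV" for L
  proof -
    interpret pL: prob_space L by (rule L(1))
    have iU: "integrable L (indicator (U j) :: _ \<Rightarrow> real)" for j
      using Ub L by (intro integrable_real_indicator) (auto simp: top.not_eq_extremum[symmetric])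
    show "integrable L s" unfolding s_def using iU by auto
    have "integral\<^sup>L L s = (\<integral>x. (\<Sum>j\<in>{1..N}. indicator (U j) x) \<partial>L) / real n"
      unfolding s_def by simp
    also have "(\<integral>x. (\<Sum>j\<in>{1..N}. indicator (U j) x) \<partial>L) = (\<Sum>j\<in>{1..N}. measure L (U j))"
      using iU L(3) by (simp add: Bochner_Integration.integral_sum)
    finally show "integral\<^sup>L L s = (\<Sum>j\<in>{1..N}. measure L (U j)) / real n" .
  qed
  have gi: "integrable \<mu> g" "integrable \<nu> g"
    using gm g0 gC sets
    by (auto intro!: pm.integrable_const_bound[where B=C] pn.integrable_const_bound[where B=C]
        simp: measurable_cong_sets[OF sets(1) refl] measurable_cong_sets[OF sets(2) refl])
  have "(\<integral>x. g x \<partial>\<mu>) \<le> (\<integral>x. s x + 1 / real n \<partial>\<mu>)"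
    using gi isL[OF pm.prob_space_axioms sets(1) sp(1)] s_ge by (intro integral_mono) auto
  also have "\<dots> = integral\<^sup>L \<mu> s + 1 / real n"
    using isL[OF pm.prob_space_axioms sets(1) sp(1)] by (simp add: pm.prob_space)
  also have "integral\<^sup>L \<mu> s \<le> integral\<^sup>L \<nu> s"
    unfolding int_s[OF pm.prob_space_axioms sets(1) sp(1)] int_s[OF pn.prob_space_axioms sets(2) sp(2)]
    using n by (intro divide_right_mono sum_mono UL Ub Uu) auto
  also have "integral\<^sup>L \<nu> s \<le> integral\<^sup>L \<nu> g"
    using gi isL[OF pn.prob_space_axioms sets(2) sp(2)] s_le by (intro integral_mono) auto
  finally show ?thesis by simp
qed


lemma st_equiv:
  fixes \<mu> \<nu> :: "(real^'n) measure"
  assumes P: "P1 \<mu>" "P1 \<nu>"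
  shows "st_le \<mu> \<nu> \<longleftrightarrow> (\<lambda>A. sm_of \<nu> A - sm_of \<mu> A) \<in> coneC"
proof -
  have d: "sm_decomp (\<lambda>A. sm_of \<nu> A - sm_of \<mu> A) \<nu> \<mu>" by (rule sm_decomp_P1[OF P])
  have fm: "fm1 \<mu>" "fm1 \<nu>" using P by (auto intro: P1_fm1)
  interpret pm: prob_space \<mu> using P by (simp add: P1_def)
  interpret pn: prob_space \<nu> using P by (simp add: P1_def)
  have sets: "sets \<mu> = sets borel" "sets \<nu> = sets borel" using P by (auto simp: P1_def)
  have sp: "space \<mu> = UNIV" "space \<nu> = UNIV" using fm by (auto dest: fm1D)
  show ?thesis
  proof
    assume st: "st_le \<mu> \<nu>"
    show "(\<lambda>A. sm_of \<nu> A - sm_of \<mu> A) \<in> coneC"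
      unfolding coneC_def
    proof (intro CollectI conjI allI impI)
      show "(\<lambda>A. sm_of \<nu> A - sm_of \<mu> A) \<in> M1" using d by (auto simp: M1_def)
      fix f :: "real^'n \<Rightarrow> real" assume "lip1 f \<and> (\<forall>x. 0 \<le> f x) \<and> mono f"
      then have f: "lip1 f" and fnn: "\<And>x. 0 \<le> f x" and fmono: "mono f" by auto
      define h where "h k x = min (f x) (real k)" for k x
      have fb: "f \<in> borel_measurable borel" by (rule lip1_borel[OF f])
      have hb: "h k \<in> borel_measurable borel" for k unfolding h_def using fb by measurable
      have hbd: "bounded (range (h k))" for k
        unfolding Elementary_Metric_Spaces.bounded_iff using fnn
        by (intro exI[of _ "real k"]) (auto simp: h_def)
      have hm: "mono (h k)" for k
        unfolding h_def mono_def
      proof (intro allI impI)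
        fix x y :: "real^'n" assume "x \<le> y"
        then have "f x \<le> f y" using fmono by (simp add: mono_def)
        then show "min (f x) (real k) \<le> min (f y) (real k)" by (simp add: min_def)
      qed
      have hle: "(\<integral>x. h k x \<partial>\<mu>) \<le> (\<integral>x. h k x \<partial>\<nu>)" for k
        using st hb hbd hm unfolding st_le_def by blast
      have lim: "(\<lambda>k. integral\<^sup>L L (h k)) \<longlonglongrightarrow> integral\<^sup>L L f" if L: "fm1 L" for L
      proof (rule integral_dominated_convergence[where w="\<lambda>x. \<bar>f x\<bar>"])
        show "f \<in> borel_measurable L" using fb by (simp add: fm1_meas[OF L])
        show "h k \<in> borel_measurable L" for k using hb by (simp add: fm1_meas[OF L])
        show "integrable L (\<lambda>x. \<bar>f x\<bar>)" using lip1_integrable[OF L f] by simp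
        show "AE x in L. norm (h k x) \<le> \<bar>f x\<bar>" for k using fnn by (simp add: h_def)
        show "AE x in L. (\<lambda>k. h k x) \<longlonglongrightarrow> f x"
        proof (intro AE_I2)
          fix x
          have "eventually (\<lambda>k. h k x = f x) sequentially"
            unfolding eventually_sequentially h_def
          proof (intro exI allI impI)
            fix k assume "nat \<lceil>f x\<rceil> \<le> k"
            then have "f x \<le> real k" using real_nat_ceiling_ge[of "f x"] by linarith
            then show "min (f x) (real k) = f x" by simp
          qed
          then show "(\<lambda>k. h k x) \<longlonglongrightarrow> f x" by (rule tendsto_eventually)
        qed
      qed
      have "integral\<^sup>L \<mu> f \<le> integral\<^sup>L \<nu> f"
        by (rule LIMSEQ_le[OF lim[OF fm(1)] lim[OF fm(2)]]) (use hle in auto)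
      then show "0 \<le> sm_integral (\<lambda>A. sm_of \<nu> A - sm_of \<mu> A) f"
        unfolding sm_integral_eq[OF d f] by simp
    qed
  next
    assume C: "(\<lambda>A. sm_of \<nu> A - sm_of \<mu> A) \<in> coneC"
    have H: "integral\<^sup>L \<mu> f \<le> integral\<^sup>L \<nu> f" if "lip1 f" "\<forall>x. 0 \<le> f x" "mono f" for f
      using C that sm_integral_eq[OF d that(1)] by (auto simp: coneC_def)
    have UL: "measure \<mu> U \<le> measure \<nu> U" if "U \<in> sets borel" "upper U" for U
      by (rule borel_upper_le[OF fm H that])
    show "st_le \<mu> \<nu>"
      unfolding st_le_def
    proof (intro allI impI, elim conjE)
      fix f :: "real^'n \<Rightarrow> real"
      assume fb: "f \<in> borel_measurable borel" and bd: "bounded (range f)" and fmono: "mono f"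
      obtain B where B: "\<And>x. \<bar>f x\<bar> \<le> B"
        using bd unfolding Elementary_Metric_Spaces.bounded_iff by auto
      define g where "g x = f x + B" for x
      have gb: "g \<in> borel_measurable borel" unfolding g_def using fb by measurable
      have g0: "0 \<le> g x" for x using B[of x] by (simp add: g_def)
      have gC: "g x \<le> 2 * B" for x using B[of x] by (simp add: g_def)
      have gm: "mono g" using fmono unfolding g_def mono_def by auto
      have fi: "integrable \<mu> f" "integrable \<nu> f"
        using fb B sets
        by (auto intro!: pm.integrable_const_bound[where B=B] pn.integrable_const_bound[where B=B]
            simp: measurable_cong_sets[OF sets(1) refl] measurable_cong_sets[OF sets(2) refl])
      have ig: "integral\<^sup>L \<mu> g = integral\<^sup>L \<mu> f + B" "integral\<^sup>L \<nu> g = integral\<^sup>L \<nu> f + B"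
        unfolding g_def using fi by (simp_all add: pm.prob_space pn.prob_space)
      show "integral\<^sup>L \<mu> f \<le> integral\<^sup>L \<nu> f"
      proof (rule field_le_epsilon)
        fix e :: real assume e: "0 < e"
        obtain n :: nat where n: "0 < n" "inverse (real n) < e"
          using ex_inverse_of_nat_less[OF e] by auto
        have "integral\<^sup>L \<mu> g \<le> integral\<^sup>L \<nu> g + 1 / real n"
          by (rule step_approx[OF P UL gb g0 gC gm n(1)])
        then show "integral\<^sup>L \<mu> f \<le> integral\<^sup>L \<nu> f + e"
          using ig n(2) by (simp add: inverse_eq_divide)
      qed
    qed
  qed
qed


theorem lemma3p5:
  shows "(\<forall>(s :: nat \<Rightarrow> (real^'n) set \<Rightarrow> real) \<mu>.
            (\<forall>k. s k \<in> coneC) \<longrightarrow> \<mu> \<in> M1 \<longrightarrow>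
            (\<lambda>k. W1norm (\<lambda>A. s k A - \<mu> A)) \<longlonglongrightarrow> 0 \<longrightarrow> \<mu> \<in> coneC)
    \<and> (\<forall>\<mu> \<in> (coneC :: ((real^'n) set \<Rightarrow> real) set). \<forall>\<nu> \<in> coneC. \<forall>t \<in> {0..1::real}.
            (\<lambda>A. t * \<mu> A + (1 - t) * \<nu> A) \<in> coneC)
    \<and> (\<forall>c > (0::real). \<forall>\<mu> \<in> (coneC :: ((real^'n) set \<Rightarrow> real) set). (\<lambda>A. c * \<mu> A) \<in> coneC)
    \<and> (coneC \<inter> (\<lambda>\<mu> A. - \<mu> A) ` coneC = {(\<lambda>A. 0) :: (real^'n) set \<Rightarrow> real})
    \<and> (\<forall>\<mu> \<nu> :: (real^'n) measure. P1 \<mu> \<longrightarrow> P1 \<nu> \<longrightarrow>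
            (st_le \<mu> \<nu> \<longleftrightarrow> (\<lambda>A. sm_of \<nu> A - sm_of \<mu> A) \<in> coneC))"
  proof (intro conjI)
  show "\<forall>(s :: nat \<Rightarrow> (real^'n) set \<Rightarrow> real) \<mu>.
            (\<forall>k. s k \<in> coneC) \<longrightarrow> \<mu> \<in> M1 \<longrightarrow>
            (\<lambda>k. W1norm (\<lambda>A. s k A - \<mu> A)) \<longlonglongrightarrow> 0 \<longrightarrow> \<mu> \<in> coneC"
    using cone_closed by blast
  show "\<forall>\<mu> \<in> (coneC :: ((real^'n) set \<Rightarrow> real) set). \<forall>\<nu> \<in> coneC. \<forall>t \<in> {0..1::real}.
            (\<lambda>A. t * \<mu> A + (1 - t) * \<nu> A) \<in> coneC"
    using cone_convex by blast
  show "\<forall>c > (0::real). \<forall>\<mu> \<in> (coneC :: ((real^'n) set \<Rightarrow> real) set). (\<lambda>A. c * \<mu> A) \<in> coneC"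
    using cone_scale by blast
  show "coneC \<inter> (\<lambda>\<mu> A. - \<mu> A) ` coneC = {(\<lambda>A. 0) :: (real^'n) set \<Rightarrow> real}"
    by (rule cone_pointed)
  show "\<forall>\<mu> \<nu> :: (real^'n) measure. P1 \<mu> \<longrightarrow> P1 \<nu> \<longrightarrow>
            (st_le \<mu> \<nu> \<longleftrightarrow> (\<lambda>A. sm_of \<nu> A - sm_of \<mu> A) \<in> coneC)"
    using st_equiv by blast
qed

end
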